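(* Let $n\ge2$ and $\rho\in\mathbb{C}\setminus\{-1,0,1\}$. If $z_k$ is a zero of $p_{2n}(\rho,z)$, then $z_k\neq0$, $z_k^{-1}$ is also a zero of $p_{2n}(\rho,z)$, $z_k\notin\{\rho,1/\rho\}$, and $$\lambda_k=\frac{z_k(1-\rho^2)}{(z_k-\rho)(1-\rho z_k)}=\frac{z_k^{-1}(1-\rho^2)}{(z_k^{-1}-\rho)(1-\rho z_k^{-1})}$$ is an eigenvalue of $K_n(\rho)$. Conversely, if $\lambda_k$ is an eigenvalue of $K_n(\rho)$, then $\lambda_k\neq0$ and the two numbers $$z_k=\tau_k+(\tau_k^2-1)^{1/2},\qquad z_k^{-1}=\tau_k-(\tau_k^2-1)^{1/2}$$ are zeros of $p_{2n}(\rho,z)$, where $\tau_k=\frac{\rho^2(\lambda_k+1)+\lambda_k-1}{2\lambda_k\rho}$.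
   Context: $K_n(\rho)=\left[\rho^{|j-k|}\right]_{j,k=1}^n$ ($n\times n$, $\rho\in\mathbb{C}$). $p_{2n}(\rho,z)=z^{2n}+(1+\rho^2)\sum_{k=1}^{n-1}z^{2k}-2\rho\sum_{k=0}^{n-1}z^{2k+1}+1$, a monic polynomial of degree $2n$ in $z$, equal to $\frac{z^{2n}(z-\rho)^2-(\rho z-1)^2}{z^2-1}$ for $z\ne\pm1$. *)

theory Defs
  imports Complex_Main "Jordan_Normal_Form.Char_Poly"
begin

definition KMS :: "nat \<Rightarrow> complex \<Rightarrow> complex mat" where
  "KMS n \<rho> = mat n n (\<lambda>(j, k). \<rho> ^ (nat \<bar>int j - int k\<bar>))"

definition p2n :: "nat \<Rightarrow> complex \<Rightarrow> complex \<Rightarrow> complex" where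
  "p2n n \<rho> z = z ^ (2 * n) + (1 + \<rho>\<^sup>2) * (\<Sum>k = 1..n - 1. z ^ (2 * k))
      - 2 * \<rho> * (\<Sum>k = 0..n - 1. z ^ (2 * k + 1)) + 1"

end

theory Submission
  imports Defs
begin


fun uu :: "complex \<Rightarrow> nat \<Rightarrow> complex" where
  "uu t 0 = 1" | "uu t (Suc 0) = t" | "uu t (Suc (Suc j)) = t * uu t (Suc j) - uu t j"

fun ss :: "complex \<Rightarrow> complex \<Rightarrow> nat \<Rightarrow> complex" where
  "ss r t 0 = 1" | "ss r t (Suc 0) = t - r" | "ss r t (Suc (Suc j)) = t * ss r t (Suc j) - ss r t j"

definition QQ :: "nat \<Rightarrow> complex \<Rightarrow> complex \<Rightarrow> complex" where
  "QQ n r t = uu t n - 2 * r * uu t (n - 1) + r\<^sup>2 * uu t (n - 2)"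

lemma ss_uu2: "ss r t (Suc j) = uu t (Suc j) - r * uu t j \<and> ss r t (Suc (Suc j)) = uu t (Suc (Suc j)) - r * uu t (Suc j)"
proof (induction j)
  case 0 then show ?case by (simp add: algebra_simps)
next
  case (Suc j)
  then have h1: "ss r t (Suc j) = uu t (Suc j) - r * uu t j" and h2: "ss r t (Suc (Suc j)) = uu t (Suc (Suc j)) - r * uu t (Suc j)" by auto
  have "ss r t (Suc (Suc (Suc j))) = t * ss r t (Suc (Suc j)) - ss r t (Suc j)" by simp
  also have "\<dots> = uu t (Suc (Suc (Suc j))) - r * uu t (Suc (Suc j))" unfolding h1 h2 by (simp add: algebra_simps)
  finally show ?case using h2 by simp
qed

lemma ss_uu: "ss r t (Suc j) = uu t (Suc j) - r * uu t j"
  using ss_uu2 by blast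

lemma ss_QQ: "ss r t (Suc (Suc m)) - r * ss r t (Suc m) = QQ (Suc (Suc m)) r t"
  unfolding QQ_def ss_uu by (simp add: algebra_simps power2_eq_square)

definition GG :: "complex \<Rightarrow> nat \<Rightarrow> complex" where
  "GG z m = (\<Sum>k=0..m. z ^ (2*k))"

lemma GG_Suc: "GG z (Suc m) = GG z m + z ^ (2 * Suc m)"
  unfolding GG_def by simp

lemma uu_GG: "z \<noteq> 0 \<Longrightarrow> z ^ j * uu (z + 1/z) j = GG z j \<and> z ^ Suc j * uu (z + 1/z) (Suc j) = GG z (Suc j)"
proof (induction j)
  case 0 then show ?case by (simp add: GG_def field_simps power2_eq_square)
next
  case (Suc j)
  then have h1: "z ^ j * uu (z + 1/z) j = GG z j" and h2: "z ^ Suc j * uu (z + 1/z) (Suc j) = GG z (Suc j)" by auto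
  have "z ^ Suc (Suc j) * uu (z + 1/z) (Suc (Suc j)) = (z^2 + 1) * (z ^ Suc j * uu (z + 1/z) (Suc j)) - z^2 * (z ^ j * uu (z + 1/z) j)"
    using Suc.prems by (simp add: field_simps power2_eq_square)
  also have "\<dots> = GG z (Suc (Suc j))" unfolding h1 h2 GG_Suc
    by (simp add: algebra_simps power2_eq_square power_add mult_2)
  finally show ?case using h2 by simp
qed

lemma GG_0[simp]: "GG z 0 = 1" unfolding GG_def by simp

lemma GG_geom: "(z\<^sup>2 - 1) * GG z m = z ^ (2 * Suc m) - 1"
  by (induction m) (simp_all add: GG_Suc algebra_simps power2_eq_square power_add mult_2)

lemma sum_shift1: "(\<Sum>k=1..Suc m. z ^ (2*k)) = z\<^sup>2 * GG z m"
  unfolding GG_def by (induction m) (simp_all add: algebra_simps power2_eq_square power_add mult_2)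

lemma sum_odd: "(\<Sum>k=0..m. z ^ (2*k+1)) = z * GG z m"
  unfolding GG_def sum_distrib_left by (simp add: algebra_simps)

lemma QQ_SS: "QQ (Suc (Suc m)) r t = uu t (Suc (Suc m)) - 2 * r * uu t (Suc m) + r\<^sup>2 * uu t m"
  by (simp add: QQ_def del: uu.simps)

lemma p2n_GG: "p2n (Suc (Suc m)) r z = z ^ (2 * Suc (Suc m)) + (1 + r\<^sup>2) * (z\<^sup>2 * GG z m) - 2 * r * (z * GG z (Suc m)) + 1"
  unfolding p2n_def using sum_shift1[where z=z and m=m] sum_odd[where z=z and m="Suc m"] by simp

lemma alg_closed:
  fixes N z P G0 G1 r :: complex
  assumes "N = z\<^sup>2 * P" "(z\<^sup>2 - 1) * G0 = P - 1" "(z\<^sup>2 - 1) * G1 = N - 1"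
  shows "(z\<^sup>2 - 1) * (N + (1 + r\<^sup>2) * (z\<^sup>2 * G0) - 2 * r * (z * G1) + 1) = N * (z - r)\<^sup>2 - (r * z - 1)\<^sup>2"
proof -
  have "(z\<^sup>2 - 1) * (N + (1 + r\<^sup>2) * (z\<^sup>2 * G0) - 2 * r * (z * G1) + 1)
     = (z\<^sup>2 - 1) * N + (1 + r\<^sup>2) * z\<^sup>2 * ((z\<^sup>2 - 1) * G0) - 2 * r * z * ((z\<^sup>2 - 1) * G1) + (z\<^sup>2 - 1)"
    by (simp add: algebra_simps)
  also have "\<dots> = N * (z - r)\<^sup>2 - (r * z - 1)\<^sup>2"
    unfolding assms(2,3) assms(1) by (simp add: algebra_simps power2_eq_square)
  finally show ?thesis .
qed

lemma p2n_closed: "(z\<^sup>2 - 1) * p2n (Suc (Suc m)) r z = z ^ (2 * Suc (Suc m)) * (z - r)\<^sup>2 - (r * z - 1)\<^sup>2"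
proof -
  have e: "z ^ (2 * Suc (Suc m)) = z\<^sup>2 * z ^ (2 * Suc m)"
    by (metis mult_Suc_right power_add add_2_eq_Suc)
  show ?thesis unfolding p2n_GG by (rule alg_closed[OF e GG_geom[of z m] GG_geom[of z "Suc m"]])
qed

lemma alg_QQ:
  fixes Z0 Z1 Z2 U0 U1 U2 z r :: complex
  assumes "Z2 = z * Z1" "Z1 = z * Z0"
  shows "Z2 * (U2 - 2 * r * U1 + r\<^sup>2 * U0) = Z2 * U2 - 2 * r * z * (Z1 * U1) + r\<^sup>2 * z\<^sup>2 * (Z0 * U0)"
  unfolding assms by (simp add: algebra_simps power2_eq_square)

lemma GG_Suc': "GG z (Suc j) = 1 + z\<^sup>2 * GG z j"
proof -
  have "GG z (Suc j) = z ^ (2*0) + (\<Sum>k=1..Suc j. z ^ (2*k))"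
    unfolding GG_def by (subst sum.atLeast_Suc_atMost) auto
  then show ?thesis using sum_shift1[where z=z and m=j] by simp
qed

lemma p2n_QQ: assumes "z \<noteq> 0" shows "p2n (Suc (Suc m)) r z = z ^ Suc (Suc m) * QQ (Suc (Suc m)) r (z + 1/z)"
proof -
  have a: "z ^ m * uu (z + 1/z) m = GG z m" and b: "z ^ Suc m * uu (z + 1/z) (Suc m) = GG z (Suc m)"
   and c: "z ^ Suc (Suc m) * uu (z + 1/z) (Suc (Suc m)) = GG z (Suc (Suc m))"
    using uu_GG[OF assms] by blast+
  have "z ^ Suc (Suc m) * QQ (Suc (Suc m)) r (z + 1/z) = z ^ Suc (Suc m) * uu (z + 1/z) (Suc (Suc m))
     - 2 * r * z * (z ^ Suc m * uu (z + 1/z) (Suc m)) + r\<^sup>2 * z\<^sup>2 * (z ^ m * uu (z + 1/z) m)"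
    unfolding QQ_SS by (rule alg_QQ) auto
  also have "\<dots> = GG z (Suc (Suc m)) - 2 * r * z * GG z (Suc m) + r\<^sup>2 * z\<^sup>2 * GG z m" unfolding a b c ..
  also have "\<dots> = p2n (Suc (Suc m)) r z" unfolding p2n_GG GG_Suc[of z "Suc m"] GG_Suc'[of z m]
    by (simp add: algebra_simps power2_eq_square)
  finally show ?thesis by simp
qed



definition WW :: "nat \<Rightarrow> complex \<Rightarrow> (nat \<Rightarrow> complex) \<Rightarrow> nat \<Rightarrow> complex" where
  "WW n r f j = (\<Sum>k<n. r ^ nat \<bar>int j - int k\<bar> * f k)"

fun AA :: "complex \<Rightarrow> (nat \<Rightarrow> complex) \<Rightarrow> nat \<Rightarrow> complex" where
  "AA r f 0 = f 0" | "AA r f (Suc j) = f (Suc j) + r * AA r f j"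

lemma AA_sum: "AA r f j = (\<Sum>k\<le>j. r ^ (j - k) * f k)"
proof (induction j)
  case 0 then show ?case by simp
next
  case (Suc j)
  have "(\<Sum>k\<le>j. r ^ (Suc j - k) * f k) = r * (\<Sum>k\<le>j. r ^ (j - k) * f k)"
    unfolding sum_distrib_left by (rule sum.cong) (auto simp: Suc_diff_le)
  then show ?case using Suc by simp
qed

lemma term1: fixes r :: complex shows "r ^ nat \<bar>int j - int k\<bar> - r * r ^ nat \<bar>int (Suc j) - int k\<bar> = (if k \<le> j then (1 - r\<^sup>2) * r ^ (j - k) else 0)"
proof (cases "k \<le> j")
  case True
  then have "nat \<bar>int j - int k\<bar> = j - k" "nat \<bar>int (Suc j) - int k\<bar> = Suc (j - k)" by auto
  then show ?thesis using True unfolding \<open>nat \<bar>int j - int k\<bar> = j - k\<close> \<open>nat \<bar>int (Suc j) - int k\<bar> = Suc (j - k)\<close>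
    by (simp add: left_diff_distrib power2_eq_square mult.assoc)
next
  case False
  then have "nat \<bar>int j - int k\<bar> = Suc (k - Suc j)" "nat \<bar>int (Suc j) - int k\<bar> = k - Suc j" by auto
  then show ?thesis using False by simp
qed

lemma L1: assumes "Suc j < n" shows "WW n r f j - r * WW n r f (Suc j) = (1 - r\<^sup>2) * AA r f j"
proof -
  have "WW n r f j - r * WW n r f (Suc j) = (\<Sum>k<n. (r ^ nat \<bar>int j - int k\<bar> - r * r ^ nat \<bar>int (Suc j) - int k\<bar>) * f k)"
    unfolding WW_def sum_distrib_left sum_subtractf[symmetric] by (rule sum.cong) (auto simp: algebra_simps)
  also have "\<dots> = (\<Sum>k<n. if k \<le> j then (1 - r\<^sup>2) * r ^ (j - k) * f k else 0)"
    unfolding term1 by (rule sum.cong) auto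
  also have "\<dots> = (\<Sum>k\<in>{k\<in>{..<n}. k \<le> j}. (1 - r\<^sup>2) * r ^ (j - k) * f k)"
    by (rule sum.inter_filter[symmetric]) auto
  also have "{k\<in>{..<n}. k \<le> j} = {..j}" using assms by auto
  finally show ?thesis unfolding AA_sum sum_distrib_left by (simp add: algebra_simps)
qed

lemma term2: fixes r :: complex shows "k < Suc (Suc m) \<Longrightarrow> r ^ nat \<bar>int (Suc m) - int k\<bar> - r * r ^ nat \<bar>int m - int k\<bar> = (if k = Suc m then 1 - r\<^sup>2 else 0)"
proof (cases "k \<le> m")
  case True
  then have "nat \<bar>int m - int k\<bar> = m - k" "nat \<bar>int (Suc m) - int k\<bar> = Suc (m - k)" by auto
  then show ?thesis using True unfolding \<open>nat \<bar>int m - int k\<bar> = m - k\<close> \<open>nat \<bar>int (Suc m) - int k\<bar> = Suc (m - k)\<close>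
    by simp
next
  case False
  assume "k < Suc (Suc m)"
  then have "k = Suc m" using False by simp
  then show ?thesis by (simp add: power2_eq_square)
qed

lemma L2: "WW (Suc (Suc m)) r f (Suc m) - r * WW (Suc (Suc m)) r f m = (1 - r\<^sup>2) * f (Suc m)"
proof -
  have "WW (Suc (Suc m)) r f (Suc m) - r * WW (Suc (Suc m)) r f m = (\<Sum>k<Suc (Suc m). (r ^ nat \<bar>int (Suc m) - int k\<bar> - r * r ^ nat \<bar>int m - int k\<bar>) * f k)"
    unfolding WW_def sum_distrib_left sum_subtractf[symmetric] by (rule sum.cong) (auto simp: algebra_simps)
  also have "\<dots> = (\<Sum>k<Suc (Suc m). if k = Suc m then (1 - r\<^sup>2) * f k else 0)"
  proof (rule sum.cong[OF refl])
    fix k assume "k \<in> {..<Suc (Suc m)}"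
    then show "(r ^ nat \<bar>int (Suc m) - int k\<bar> - r * r ^ nat \<bar>int m - int k\<bar>) * f k = (if k = Suc m then (1 - r\<^sup>2) * f k else 0)"
      using term2[of k m r] by simp
  qed
  also have "\<dots> = (1 - r\<^sup>2) * f (Suc m)" by simp
  finally show ?thesis .
qed

lemma KMS_mult: assumes "v \<in> carrier_vec n" "j < n" shows "(KMS n r *\<^sub>v v) $ j = WW n r (\<lambda>k. v $ k) j"
  using assms unfolding KMS_def WW_def
  by (simp add: scalar_prod_def lessThan_atLeast0 algebra_simps)



lemma ssA:
  fixes l r t :: complex
  assumes rel: "l * r * t = r\<^sup>2 * (l + 1) + l - 1"
  shows "l * (ss r t j - r * ss r t (Suc j)) = (1 - r\<^sup>2) * AA r (ss r t) j"
proof (induction j)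
  case 0
  have "l * (1 - r * (t - r)) = l + l * r\<^sup>2 - l * r * t" by (simp add: algebra_simps power2_eq_square)
  also have "\<dots> = 1 - r\<^sup>2" unfolding rel by (simp add: algebra_simps)
  finally show ?case by simp
next
  case (Suc j)
  have "l * (ss r t (Suc j) - r * ss r t (Suc (Suc j))) = (l - l * r * t) * ss r t (Suc j) + r * l * ss r t j"
    by (simp add: algebra_simps)
  also have "\<dots> = (1 - r\<^sup>2 - r\<^sup>2 * l) * ss r t (Suc j) + r * l * ss r t j"
    unfolding rel by (simp add: algebra_simps)
  also have "\<dots> = (1 - r\<^sup>2) * ss r t (Suc j) + r * (l * (ss r t j - r * ss r t (Suc j)))"
    by (simp add: algebra_simps power2_eq_square)
  also have "\<dots> = (1 - r\<^sup>2) * AA r (ss r t) (Suc j)" unfolding Suc by (simp add: algebra_simps)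
  finally show ?case .
qed

lemma dirB:
  fixes l r t :: complex
  assumes n: "n = Suc (Suc m)" and r2: "r\<^sup>2 \<noteq> 1" and l: "l \<noteq> 0"
    and rel: "l * r * t = r\<^sup>2 * (l + 1) + l - 1" and Q: "QQ n r t = 0"
  shows "eigenvalue (KMS n r) l"
proof -
  define v where "v = vec n (ss r t)"
  have vc: "v \<in> carrier_vec n" unfolding v_def by simp
  have v0: "v \<noteq> 0\<^sub>v n"
  proof
    assume "v = 0\<^sub>v n"
    then have "v $ 0 = 0" using n by simp
    then show False unfolding v_def using n by simp
  qed
  define d where "d j = WW n r (ss r t) j - l * ss r t j" for j
  have WWv: "WW n r (\<lambda>k. v $ k) j = WW n r (ss r t) j" for j
    unfolding WW_def v_def by (rule sum.cong) auto
  have D1: "d j = r * d (Suc j)" if "Suc j < n" for j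
  proof -
    have "WW n r (ss r t) j - r * WW n r (ss r t) (Suc j) = l * (ss r t j - r * ss r t (Suc j))"
      unfolding L1[OF that] ssA[OF rel] ..
    then show ?thesis unfolding d_def by (simp add: algebra_simps)
  qed
  have E: "l * (ss r t (Suc m) - r * ss r t m) = (1 - r\<^sup>2) * ss r t (Suc m)"
  proof -
    have "ss r t (Suc (Suc m)) - r * ss r t (Suc m) = 0" using Q unfolding n ss_QQ by simp
    then have "t * ss r t (Suc m) - ss r t m - r * ss r t (Suc m) = 0" by simp
    then have "l * r * (t * ss r t (Suc m) - ss r t m - r * ss r t (Suc m)) = 0" by simp
    then have "(l * r * t) * ss r t (Suc m) - l * r * ss r t m - l * r * r * ss r t (Suc m) = 0"
      by (simp add: algebra_simps)
    then have "(r\<^sup>2 * (l + 1) + l - 1) * ss r t (Suc m) - l * r * ss r t m - l * r * r * ss r t (Suc m) = 0"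
      unfolding rel .
    then show ?thesis by (simp add: algebra_simps power2_eq_square)
  qed
  have D2: "d (Suc m) = r * d m"
  proof -
    have "WW n r (ss r t) (Suc m) - r * WW n r (ss r t) m = (1 - r\<^sup>2) * ss r t (Suc m)"
      unfolding n by (rule L2)
    then have "WW n r (ss r t) (Suc m) - r * WW n r (ss r t) m = l * (ss r t (Suc m) - r * ss r t m)"
      using E by simp
    then show ?thesis unfolding d_def by (simp add: algebra_simps)
  qed
  have "d (Suc m) = r\<^sup>2 * d (Suc m)" using D2 D1[of m] n by (simp add: power2_eq_square)
  then have "(1 - r\<^sup>2) * d (Suc m) = 0" by (simp add: algebra_simps)
  then have dlast: "d (Suc m) = 0" using r2 by simp
  have dz: "d (Suc m - i) = 0" if "i \<le> Suc m" for i
    using that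
  proof (induction i)
    case 0 then show ?case using dlast by simp
  next
    case (Suc i)
    then have "Suc (Suc m - Suc i) = Suc m - i" by simp
    then show ?case using D1[of "Suc m - Suc i"] Suc n by simp
  qed
  have "KMS n r *\<^sub>v v = l \<cdot>\<^sub>v v"
  proof (rule eq_vecI)
    show "dim_vec (KMS n r *\<^sub>v v) = dim_vec (l \<cdot>\<^sub>v v)" using vc by (simp add: KMS_def)
    fix j assume "j < dim_vec (l \<cdot>\<^sub>v v)"
    then have j: "j < n" using vc by simp
    have "d j = 0" using dz[of "Suc m - j"] j n by simp
    then show "(KMS n r *\<^sub>v v) $ j = (l \<cdot>\<^sub>v v) $ j"
      using KMS_mult[OF vc j] WWv j unfolding d_def v_def by simp
  qed
  then show ?thesis unfolding eigenvalue_def eigenvector_def using vc v0 by (auto simp: KMS_def)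
qed



lemma dirA:
  fixes l r :: complex
  assumes n: "n = Suc (Suc m)" and r0: "r \<noteq> 0" and r2: "r\<^sup>2 \<noteq> 1" and ev: "eigenvalue (KMS n r) l"
  shows "l \<noteq> 0 \<and> QQ n r ((r\<^sup>2 * (l + 1) + l - 1) / (l * r)) = 0"
proof -
  obtain v where vc: "v \<in> carrier_vec n" and v0: "v \<noteq> 0\<^sub>v n" and ve: "KMS n r *\<^sub>v v = l \<cdot>\<^sub>v v"
    using ev unfolding eigenvalue_def eigenvector_def by (auto simp: KMS_def)
  define f where "f k = v $ k" for k
  have W: "WW n r f j = l * f j" if "j < n" for j
  proof -
    have "(KMS n r *\<^sub>v v) $ j = (l \<cdot>\<^sub>v v) $ j" using ve by simp
    then show ?thesis using KMS_mult[OF vc that] vc that unfolding f_def by simp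
  qed
  have nz: "\<exists>j<n. f j \<noteq> 0"
  proof (rule ccontr)
    assume "\<not> ?thesis"
    then have "v = 0\<^sub>v n" using vc unfolding f_def by (intro eq_vecI) auto
    then show False using v0 by simp
  qed
  have r2': "1 - r\<^sup>2 \<noteq> 0" using r2 by simp
  have l0: "l \<noteq> 0"
  proof
    assume l: "l = 0"
    have A0: "AA r f j = 0" if "Suc j < n" for j
    proof -
      have "(1 - r\<^sup>2) * AA r f j = 0" using L1[OF that, where r=r and f=f] W[of j] W[of "Suc j"] that l by simp
      then show ?thesis using r2' by simp
    qed
    have "f (Suc m) = 0"
    proof -
      have "(1 - r\<^sup>2) * f (Suc m) = 0" using L2[where r=r and f=f and m=m] W[of m] W[of "Suc m"] n l by simp
      then show ?thesis using r2' by simp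
    qed
    moreover have "f j = 0" if "j < Suc m" for j
    proof (cases j)
      case 0 then show ?thesis using A0[of 0] n by simp
    next
      case (Suc i) then show ?thesis using A0[of i] A0[of "Suc i"] n that by simp
    qed
    ultimately have "f j = 0" if "j < n" for j using that n less_Suc_eq by auto
    then show False using nz by auto
  qed
  define t where "t = (r\<^sup>2 * (l + 1) + l - 1) / (l * r)"
  have rel: "l * r * t = r\<^sup>2 * (l + 1) + l - 1" unfolding t_def using l0 r0 by simp
  have lr: "l * r \<noteq> 0" using l0 r0 by simp
  have rec: "f j = f 0 * ss r t j \<and> f (Suc j) = f 0 * ss r t (Suc j)" if "Suc j < n" for j
    using that
  proof (induction j)
    case 0
    have "l * f 0 - r * (l * f 1) = (1 - r\<^sup>2) * f 0" using L1[where j=0 and n=n and r=r and f=f] W[of 0] W[of 1] 0 by simp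
    then have "l * r * (f 1 - f 0 * (t - r)) = (l - l * r * t + l * r * r - (1 - r\<^sup>2)) * f 0"
      by (simp add: algebra_simps)
    also have "\<dots> = 0" unfolding rel by (simp add: algebra_simps power2_eq_square)
    finally have "f 1 - f 0 * (t - r) = 0" using lr by simp
    then show ?case by simp
  next
    case (Suc j)
    then have IH: "f j = f 0 * ss r t j" "f (Suc j) = f 0 * ss r t (Suc j)" by auto
    have e1: "l * f j - r * (l * f (Suc j)) = (1 - r\<^sup>2) * AA r f j"
      using L1[where j=j and n=n and r=r and f=f] W[of j] W[of "Suc j"] Suc.prems by simp
    have e2: "l * f (Suc j) - r * (l * f (Suc (Suc j))) = (1 - r\<^sup>2) * (f (Suc j) + r * AA r f j)"
      using L1[where j="Suc j" and n=n and r=r and f=f] W[of "Suc j"] W[of "Suc (Suc j)"] Suc.prems by simp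
    have "l * f (Suc j) - r * (l * f (Suc (Suc j))) = (1 - r\<^sup>2) * f (Suc j) + r * ((1 - r\<^sup>2) * AA r f j)"
      using e2 by (simp add: algebra_simps)
    also have "\<dots> = (1 - r\<^sup>2) * f (Suc j) + r * (l * f j - r * (l * f (Suc j)))" unfolding e1 ..
    finally have "l * r * (f (Suc (Suc j)) - (t * f (Suc j) - f j)) = (l + l * r * r - l * r * t - (1 - r\<^sup>2)) * f (Suc j)"
      by (simp add: algebra_simps)
    also have "\<dots> = 0" unfolding rel by (simp add: algebra_simps power2_eq_square)
    finally have "f (Suc (Suc j)) = t * f (Suc j) - f j" using lr by simp
    then show ?case using IH by (simp add: algebra_simps)
  qed
  have all: "f j = f 0 * ss r t j" if "j < n" for j
  proof (cases "Suc j < n")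
    case True then show ?thesis using rec by blast
  next
    case False
    then have "j = Suc m" using that n by simp
    then show ?thesis using rec[of m] n by simp
  qed
  have f0: "f 0 \<noteq> 0" using nz all by auto
  have "l * f (Suc m) - r * (l * f m) = (1 - r\<^sup>2) * f (Suc m)"
    using L2[where r=r and f=f and m=m] W[of m] W[of "Suc m"] n by simp
  then have "f 0 * (l * ss r t (Suc m) - r * l * ss r t m - (1 - r\<^sup>2) * ss r t (Suc m)) = 0"
    using all[of m] all[of "Suc m"] n by (simp add: algebra_simps)
  then have E0: "l * ss r t (Suc m) - r * l * ss r t m - (1 - r\<^sup>2) * ss r t (Suc m) = 0" using f0 by simp
  have "l * r * (ss r t (Suc (Suc m)) - r * ss r t (Suc m)) = (l * r * t - l * r * r) * ss r t (Suc m) - l * r * ss r t m"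
    by (simp add: algebra_simps)
  also have "\<dots> = l * ss r t (Suc m) - r * l * ss r t m - (1 - r\<^sup>2) * ss r t (Suc m)"
    unfolding rel by (simp add: algebra_simps power2_eq_square)
  also have "\<dots> = 0" by (rule E0)
  finally have "ss r t (Suc (Suc m)) - r * ss r t (Suc m) = 0" using lr by simp
  then have "QQ n r t = 0" unfolding n ss_QQ by simp
  then show ?thesis using l0 unfolding t_def by simp
qed



theorem theorem3p3:
  fixes n :: nat and \<rho> :: complex
  assumes "n \<ge> 2" and "\<rho> \<notin> {-1, 0, 1}"
  shows "(\<forall>z. p2n n \<rho> z = 0 \<longrightarrow>
            z \<noteq> 0 \<and> p2n n \<rho> (inverse z) = 0 \<and> z \<notin> {\<rho>, 1 / \<rho>} \<and>
            z * (1 - \<rho>\<^sup>2) / ((z - \<rho>) * (1 - \<rho> * z))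
              = inverse z * (1 - \<rho>\<^sup>2) / ((inverse z - \<rho>) * (1 - \<rho> * inverse z)) \<and>
            eigenvalue (KMS n \<rho>) (z * (1 - \<rho>\<^sup>2) / ((z - \<rho>) * (1 - \<rho> * z))))
       \<and> (\<forall>l. eigenvalue (KMS n \<rho>) l \<longrightarrow>
            (let \<tau> = (\<rho>\<^sup>2 * (l + 1) + l - 1) / (2 * l * \<rho>) in
              l \<noteq> 0 \<and> p2n n \<rho> (\<tau> + csqrt (\<tau>\<^sup>2 - 1)) = 0 \<and>
              p2n n \<rho> (\<tau> - csqrt (\<tau>\<^sup>2 - 1)) = 0))"
proof -
  obtain m where n: "n = Suc (Suc m)" using assms(1) by (metis add_2_eq_Suc le_Suc_ex)
  have r0: "\<rho> \<noteq> 0" using assms(2) by auto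
  have r2: "\<rho>\<^sup>2 \<noteq> 1"
  proof
    assume "\<rho>\<^sup>2 = 1"
    then have "(\<rho> - 1) * (\<rho> + 1) = 0" by (simp add: algebra_simps power2_eq_square)
    then show False using assms(2) by (auto simp: add_eq_0_iff minus_equation_iff)
  qed
  have r2': "1 - \<rho>\<^sup>2 \<noteq> 0" using r2 by simp
  have part1: "z \<noteq> 0 \<and> p2n n \<rho> (inverse z) = 0 \<and> z \<notin> {\<rho>, 1 / \<rho>} \<and>
            z * (1 - \<rho>\<^sup>2) / ((z - \<rho>) * (1 - \<rho> * z))
              = inverse z * (1 - \<rho>\<^sup>2) / ((inverse z - \<rho>) * (1 - \<rho> * inverse z)) \<and>
            eigenvalue (KMS n \<rho>) (z * (1 - \<rho>\<^sup>2) / ((z - \<rho>) * (1 - \<rho> * z)))"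
    if pz: "p2n n \<rho> z = 0" for z
  proof -
    have z0: "z \<noteq> 0"
    proof
      assume "z = 0"
      then have "(0\<^sup>2 - 1) * p2n n \<rho> 0 = 0 ^ (2 * Suc (Suc m)) * (0 - \<rho>)\<^sup>2 - (\<rho> * 0 - 1)\<^sup>2"
        using p2n_closed[where z=0 and m=m and r=\<rho>] n by simp
      then have "p2n n \<rho> 0 = 1" by simp
      then show False using pz \<open>z = 0\<close> by simp
    qed
    have Q0: "QQ n \<rho> (z + 1/z) = 0" using p2n_QQ[OF z0, where m=m and r=\<rho>] pz z0 n by simp
    have inv: "p2n n \<rho> (inverse z) = 0"
    proof -
      have iz: "inverse z \<noteq> 0" using z0 by simp
      have "inverse z + 1 / inverse z = z + 1/z" by (simp add: field_simps)
      then show ?thesis using p2n_QQ[OF iz, where m=m and r=\<rho>] Q0 n by simp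
    qed
    have zr: "z \<noteq> \<rho>"
    proof
      assume "z = \<rho>"
      have "(\<rho>\<^sup>2 - 1) * p2n n \<rho> \<rho> = \<rho> ^ (2 * Suc (Suc m)) * (\<rho> - \<rho>)\<^sup>2 - (\<rho> * \<rho> - 1)\<^sup>2"
        using p2n_closed[where z=\<rho> and m=m and r=\<rho>] n by simp
      then have "(\<rho>\<^sup>2 - 1) * p2n n \<rho> \<rho> = - (\<rho>\<^sup>2 - 1)\<^sup>2" by (simp add: power2_eq_square)
      then show False using pz \<open>z = \<rho>\<close> r2 by simp
    qed
    have zr': "z \<noteq> 1 / \<rho>"
    proof
      assume zq: "z = 1 / \<rho>"
      have "((1/\<rho>)\<^sup>2 - 1) * p2n n \<rho> (1/\<rho>) = (1/\<rho>) ^ (2 * Suc (Suc m)) * (1/\<rho> - \<rho>)\<^sup>2 - (\<rho> * (1/\<rho>) - 1)\<^sup>2"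
        using p2n_closed[where z="1/\<rho>" and m=m and r=\<rho>] n by simp
      moreover have "1/\<rho> - \<rho> \<noteq> 0"
      proof
        assume "1/\<rho> - \<rho> = 0"
        then have "1 = \<rho> * \<rho>" using r0 by (simp add: field_simps)
        then show False using r2 by (simp add: power2_eq_square)
      qed
      ultimately show False using pz zq r0 by simp
    qed
    have d1: "z - \<rho> \<noteq> 0" using zr by simp
    have d2: "1 - \<rho> * z \<noteq> 0"
    proof
      assume "1 - \<rho> * z = 0"
      then have "z = 1 / \<rho>" using r0 by (simp add: field_simps)
      then show False using zr' by simp
    qed
    define lam where "lam = z * (1 - \<rho>\<^sup>2) / ((z - \<rho>) * (1 - \<rho> * z))"
    have lam0: "lam \<noteq> 0" unfolding lam_def using z0 r2' d1 d2 by simp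
    have eq: "lam = inverse z * (1 - \<rho>\<^sup>2) / ((inverse z - \<rho>) * (1 - \<rho> * inverse z))"
    proof -
      have "(inverse z - \<rho>) * (1 - \<rho> * inverse z) = (1 - \<rho> * z) * (z - \<rho>) / z\<^sup>2"
        using z0 by (simp add: field_simps power2_eq_square)
      then have "inverse z * (1 - \<rho>\<^sup>2) / ((inverse z - \<rho>) * (1 - \<rho> * inverse z))
          = inverse z * (1 - \<rho>\<^sup>2) * z\<^sup>2 / ((z - \<rho>) * (1 - \<rho> * z))"
        by (simp add: mult.commute)
      also have "inverse z * (1 - \<rho>\<^sup>2) * z\<^sup>2 = z * (1 - \<rho>\<^sup>2)"
        using z0 by (simp add: power2_eq_square field_simps)
      finally show ?thesis unfolding lam_def by simp
    qed
    have rel: "lam * \<rho> * (z + 1/z) = \<rho>\<^sup>2 * (lam + 1) + lam - 1"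
    proof -
      define D where "D = (z - \<rho>) * (1 - \<rho> * z)"
      have D0: "D \<noteq> 0" unfolding D_def using d1 d2 by simp
      have Dl: "D * lam = z * (1 - \<rho>\<^sup>2)" unfolding lam_def D_def[symmetric] using D0 by simp
      have "D * (lam * \<rho> * (z + 1/z)) = (D * lam) * \<rho> * (z + 1/z)" by (simp add: mult.assoc)
      also have "\<dots> = z * (1 - \<rho>\<^sup>2) * \<rho> * (z + 1/z)" unfolding Dl ..
      also have "\<dots> = \<rho> * (1 - \<rho>\<^sup>2) * (z * z + 1)" using z0 by (simp add: field_simps)
      finally have e1: "D * (lam * \<rho> * (z + 1/z)) = \<rho> * (1 - \<rho>\<^sup>2) * (z * z + 1)" .
      have "D * (\<rho>\<^sup>2 * (lam + 1) + lam - 1) = \<rho>\<^sup>2 * (D * lam + D) + D * lam - D" by (simp add: algebra_simps)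
      also have "\<dots> = \<rho>\<^sup>2 * (z * (1 - \<rho>\<^sup>2) + D) + z * (1 - \<rho>\<^sup>2) - D" unfolding Dl ..
      also have "\<dots> = \<rho> * (1 - \<rho>\<^sup>2) * (z * z + 1)" unfolding D_def by (simp add: algebra_simps power2_eq_square)
      finally have e2: "D * (\<rho>\<^sup>2 * (lam + 1) + lam - 1) = \<rho> * (1 - \<rho>\<^sup>2) * (z * z + 1)" .
      from e1 e2 have "D * (lam * \<rho> * (z + 1/z)) = D * (\<rho>\<^sup>2 * (lam + 1) + lam - 1)" by simp
      then show ?thesis using D0 by simp
    qed
    have ev: "eigenvalue (KMS n \<rho>) lam"
      by (rule dirB[OF n r2 lam0 rel]) (use Q0 in simp)
    show ?thesis using z0 inv zr zr' eq ev unfolding lam_def by simp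
  qed
  have part2: "l \<noteq> 0 \<and> p2n n \<rho> (\<tau> + csqrt (\<tau>\<^sup>2 - 1)) = 0 \<and> p2n n \<rho> (\<tau> - csqrt (\<tau>\<^sup>2 - 1)) = 0"
    if ev: "eigenvalue (KMS n \<rho>) l" and tau: "\<tau> = (\<rho>\<^sup>2 * (l + 1) + l - 1) / (2 * l * \<rho>)" for l \<tau>
  proof -
    define t where "t = (\<rho>\<^sup>2 * (l + 1) + l - 1) / (l * \<rho>)"
    have A: "l \<noteq> 0" "QQ n \<rho> t = 0" using dirA[OF n r0 r2 ev] unfolding t_def by auto
    have t2': "\<tau> = t / 2" unfolding tau t_def by (metis divide_divide_eq_left mult.assoc mult.commute)
    have t2: "2 * \<tau> = t" unfolding t2' by simp
    define z where "z = \<tau> + csqrt (\<tau>\<^sup>2 - 1)"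
    define w where "w = \<tau> - csqrt (\<tau>\<^sup>2 - 1)"
    have zw: "z * w = 1"
    proof -
      have "z * w = \<tau>\<^sup>2 - (csqrt (\<tau>\<^sup>2 - 1))\<^sup>2"
        unfolding z_def w_def by (simp add: algebra_simps power2_eq_square)
      then show ?thesis by simp
    qed
    have z0: "z \<noteq> 0" and w0: "w \<noteq> 0" using zw by auto
    have wz: "1 / z = w" "1 / w = z" using zw z0 w0 by (metis divide_eq_eq mult.commute)+
    have s: "z + w = t" unfolding z_def w_def using t2 by simp
    have pz: "p2n n \<rho> z = 0" using p2n_QQ[OF z0, where m=m and r=\<rho>] n wz s A by simp
    have pw: "p2n n \<rho> w = 0" using p2n_QQ[OF w0, where m=m and r=\<rho>] n wz s A by (simp add: add.commute)
    show ?thesis using A pz pw unfolding z_def w_def by simp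
  qed
  show ?thesis unfolding Let_def using part1 part2[OF _ refl] by blast
qed

end
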